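(* Let $B$ be a locally compact Hausdorff space, let $(X,r)$ be a $B$-space, let $(X',r')$ be a $B$-space with $X'$ Hausdorff and $r'$ proper, and let $f\colon X\to X'$ be a $B$-map. Then there is a unique continuous map $f'\colon\beta_BX\to X'$ with $f'\circ i=f$, where $i\colon X\to\beta_BX$ is the canonical map. The map $f'$ is automatically proper.
   Context: A $B$-space is a topological space $Z$ with a continuous map $r\colon Z\to B$; a $B$-map $(Z_1,r_1)\to(Z_2,r_2)$ is a continuous map $f$ with $r_2\circ f=r_1$. For a $B$-space $(X,r)$, let $H_X\subseteq\mathrm{C_b}(X)$ be the closed linear span of products $g\cdot(h\circ r)$ with $g\in\mathrm{C_b}(X)$ and $h\in\mathrm C_0(B)$, a commutative C*-algebra. The relative Stone--Čech compactification $\beta_BX$ is the spectrum of $H_X$ (so $H_X\cong\mathrm C_0(\beta_BX)$), and $i\colon X\to\beta_BX$ maps $x$ to the character $\varphi\mapsto\varphi(x)$. *)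

theory Defs
  imports "HOL-Analysis.Analysis"
begin

definition Cb :: "'a topology \<Rightarrow> ('a \<Rightarrow> complex) set" where
  "Cb X = {g. continuous_map X euclidean g \<and> bounded (g ` topspace X)
              \<and> (\<forall>x. x \<notin> topspace X \<longrightarrow> g x = 0)}"

definition C0 :: "'b topology \<Rightarrow> ('b \<Rightarrow> complex) set" where
  "C0 B = {h. continuous_map B euclidean h
              \<and> (\<forall>e>0. \<exists>K. compactin B K \<and> (\<forall>y \<in> topspace B - K. norm (h y) < e))
              \<and> (\<forall>y. y \<notin> topspace B \<longrightarrow> h y = 0)}"

definition Hspan :: "'a topology \<Rightarrow> 'b topology \<Rightarrow> ('a \<Rightarrow> 'b) \<Rightarrow> ('a \<Rightarrow> complex) set" where
  "Hspan X B r = {(\<lambda>x. \<Sum>i<n. g i x * h i (r x)) | (n::nat) g h.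
                    \<forall>i<n. g i \<in> Cb X \<and> h i \<in> C0 B}"

definition HX :: "'a topology \<Rightarrow> 'b topology \<Rightarrow> ('a \<Rightarrow> 'b) \<Rightarrow> ('a \<Rightarrow> complex) set" where
  "HX X B r = {f \<in> Cb X. \<forall>e>0. \<exists>s \<in> Hspan X B r. \<forall>x \<in> topspace X. norm (f x - s x) < e}"

definition characters :: "('a \<Rightarrow> complex) set \<Rightarrow> (('a \<Rightarrow> complex) \<Rightarrow> complex) set" where
  "characters H = {\<phi> \<in> extensional H.
      (\<forall>a\<in>H. \<forall>b\<in>H. \<phi> (\<lambda>x. a x + b x) = \<phi> a + \<phi> b)
    \<and> (\<forall>a\<in>H. \<forall>c. \<phi> (\<lambda>x. c * a x) = c * \<phi> a)
    \<and> (\<forall>a\<in>H. \<forall>b\<in>H. \<phi> (\<lambda>x. a x * b x) = \<phi> a * \<phi> b)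
    \<and> (\<exists>a\<in>H. \<phi> a \<noteq> 0)}"

text \<open>Relative Stone-Cech compactification: spectrum of H_X with the weak-* topology
  (= subspace topology of the product topology of pointwise evaluation).\<close>
definition betaB :: "'a topology \<Rightarrow> 'b topology \<Rightarrow> ('a \<Rightarrow> 'b)
                     \<Rightarrow> (('a \<Rightarrow> complex) \<Rightarrow> complex) topology" where
  "betaB X B r = subtopology (product_topology (\<lambda>_. euclidean) (HX X B r)) (characters (HX X B r))"

definition betaI :: "'a topology \<Rightarrow> 'b topology \<Rightarrow> ('a \<Rightarrow> 'b) \<Rightarrow> 'a
                     \<Rightarrow> (('a \<Rightarrow> complex) \<Rightarrow> complex)" where
  "betaI X B r x = restrict (\<lambda>g. g x) (HX X B r)"

end

theory Submission
  imports Defs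
begin

lemma cm_mult: "continuous_map X euclidean (f::'a\<Rightarrow>complex) \<Longrightarrow> continuous_map X euclidean g
  \<Longrightarrow> continuous_map X euclidean (\<lambda>x. f x * g x)"
  by (simp add: continuous_map_atin tendsto_mult)

lemma cm_cnj: "continuous_map X euclidean (f::'a\<Rightarrow>complex) \<Longrightarrow> continuous_map X euclidean (\<lambda>x. cnj (f x))"
  by (simp add: continuous_map_atin tendsto_cnj)

lemma cm_inverse: "continuous_map X euclidean (f::'a\<Rightarrow>complex) \<Longrightarrow> (\<And>x. x \<in> topspace X \<Longrightarrow> f x \<noteq> 0)
  \<Longrightarrow> continuous_map X euclidean (\<lambda>x. inverse (f x))"
  by (simp add: continuous_map_atin tendsto_inverse)

lemma cm_of_real: "continuous_map X euclidean (f::'a\<Rightarrow>real) \<Longrightarrow> continuous_map X euclidean (\<lambda>x. complex_of_real (f x))"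
  by (simp add: continuous_map_atin tendsto_of_real)

lemma Cb_zero: "g \<in> Cb X \<Longrightarrow> x \<notin> topspace X \<Longrightarrow> g x = 0"
  by (simp add: Cb_def)

lemma Cb_cont: "g \<in> Cb X \<Longrightarrow> continuous_map X euclidean g"
  by (simp add: Cb_def)

lemma Cb_bound: assumes "g \<in> Cb X" shows "\<exists>M>0. \<forall>x. norm (g x) \<le> M"
proof -
  obtain M where M: "M > 0" "\<forall>y\<in>g ` topspace X. norm y \<le> M"
    using assms unfolding Cb_def bounded_pos by blast
  show ?thesis using M assms by (intro exI[of _ M]) (auto simp: Cb_def)
qed

lemma Cb_intro: "continuous_map X euclidean g \<Longrightarrow> (\<And>x. x \<in> topspace X \<Longrightarrow> norm (g x) \<le> M)
  \<Longrightarrow> (\<And>x. x \<notin> topspace X \<Longrightarrow> g x = 0) \<Longrightarrow> g \<in> Cb X"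
  unfolding Cb_def bounded_iff by blast

lemma Cb_mult: assumes "g \<in> Cb X" "k \<in> Cb X" shows "(\<lambda>x. g x * k x) \<in> Cb X"
proof -
  obtain M where M: "\<forall>x. norm (g x) \<le> M" using Cb_bound assms(1) by blast
  obtain K where K: "\<forall>x. norm (k x) \<le> K" using Cb_bound assms(2) by blast
  show ?thesis
  proof (rule Cb_intro[where M="M*K"])
    show "continuous_map X euclidean (\<lambda>x. g x * k x)" using assms by (intro cm_mult Cb_cont)
    show "norm (g x * k x) \<le> M * K" for x
      using M K by (simp add: norm_mult mult_mono')
  qed (use assms in \<open>simp add: Cb_zero\<close>)
qed

lemma Cb_add: assumes "g \<in> Cb X" "k \<in> Cb X" shows "(\<lambda>x. g x + k x) \<in> Cb X"
proof -
  obtain M where M: "\<forall>x. norm (g x) \<le> M" using Cb_bound assms(1) by blast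
  obtain K where K: "\<forall>x. norm (k x) \<le> K" using Cb_bound assms(2) by blast
  show ?thesis
  proof (rule Cb_intro[where M="M+K"])
    show "continuous_map X euclidean (\<lambda>x. g x + k x)" using assms by (intro continuous_map_add Cb_cont)
    show "norm (g x + k x) \<le> M + K" for x
      using M K by (meson add_mono norm_triangle_ineq order_trans)
  qed (use assms in \<open>simp add: Cb_zero\<close>)
qed

lemma Cb_cnj: assumes "g \<in> Cb X" shows "(\<lambda>x. cnj (g x)) \<in> Cb X"
proof -
  obtain M where M: "\<forall>x. norm (g x) \<le> M" using Cb_bound assms(1) by blast
  show ?thesis
    by (rule Cb_intro[where M=M]) (use assms M in \<open>auto simp: Cb_zero intro: cm_cnj Cb_cont\<close>)
qed

definition cconst :: "'a topology \<Rightarrow> complex \<Rightarrow> 'a \<Rightarrow> complex" where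
  "cconst X c = (\<lambda>x. if x \<in> topspace X then c else 0)"

lemma Cb_const: "cconst X c \<in> Cb X"
proof (rule Cb_intro[where M="norm c"])
  show "continuous_map X euclidean (cconst X c)"
    by (rule continuous_map_eq[where f="\<lambda>x. c"]) (auto simp: cconst_def)
qed (auto simp: cconst_def)

lemma Hspan_zero: "s \<in> Hspan X B r \<Longrightarrow> x \<notin> topspace X \<Longrightarrow> s x = 0"
  unfolding Hspan_def by (auto intro!: sum.neutral simp: Cb_zero)

lemma Hspan_mult: assumes "s \<in> Hspan X B r" "k \<in> Cb X" shows "(\<lambda>x. s x * k x) \<in> Hspan X B r"
proof -
  obtain n :: nat and g h where s: "s = (\<lambda>x. \<Sum>i<n. g i x * h i (r x))" and gh: "\<forall>i<n. g i \<in> Cb X \<and> h i \<in> C0 B"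
    using assms(1) unfolding Hspan_def by blast
  have "(\<lambda>x. s x * k x) = (\<lambda>x. \<Sum>i<n. (\<lambda>i x. g i x * k x) i x * h i (r x))"
    by (simp add: s sum_distrib_left mult_ac)
  moreover have "\<forall>i<n. (\<lambda>i x. g i x * k x) i \<in> Cb X \<and> h i \<in> C0 B"
    using gh assms(2) by (auto intro: Cb_mult)
  ultimately show ?thesis unfolding Hspan_def
    by (intro CollectI exI[of _ n] exI[of _ "\<lambda>i x. g i x * k x"] exI[of _ h]) simp
qed

lemma Hspan_add: assumes "s \<in> Hspan X B r" "t \<in> Hspan X B r" shows "(\<lambda>x. s x + t x) \<in> Hspan X B r"
proof -
  obtain n :: nat and g h where s: "s = (\<lambda>x. \<Sum>i<n. g i x * h i (r x))" and gh: "\<forall>i<n. g i \<in> Cb X \<and> h i \<in> C0 B"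
    using assms(1) unfolding Hspan_def by blast
  obtain m :: nat and g' h' where t: "t = (\<lambda>x. \<Sum>i<m. g' i x * h' i (r x))" and gh': "\<forall>i<m. g' i \<in> Cb X \<and> h' i \<in> C0 B"
    using assms(2) unfolding Hspan_def by blast
  define G where "G = (\<lambda>i. if i < n then g i else g' (i - n))"
  define K where "K = (\<lambda>i. if i < n then h i else h' (i - n))"
  have "(\<Sum>i<n+m. G i x * K i (r x)) = (\<Sum>i<n. g i x * h i (r x)) + (\<Sum>i<m. g' i x * h' i (r x))" for x
  proof -
    have "(\<Sum>i<n+m. G i x * K i (r x)) = (\<Sum>i\<in>{0..<n}. G i x * K i (r x)) + (\<Sum>i\<in>{n..<n+m}. G i x * K i (r x))"
      by (simp add: lessThan_atLeast0 sum.atLeastLessThan_concat)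
    also have "(\<Sum>i\<in>{0..<n}. G i x * K i (r x)) = (\<Sum>i<n. g i x * h i (r x))"
      by (auto simp: G_def K_def lessThan_atLeast0 intro!: sum.cong)
    also have "(\<Sum>i\<in>{n..<n+m}. G i x * K i (r x)) = (\<Sum>i\<in>{0..<m}. G (i+n) x * K (i+n) (r x))"
      using sum.shift_bounds_nat_ivl[of "\<lambda>i. G i x * K i (r x)" 0 n m] by (simp add: add.commute)
    also have "\<dots> = (\<Sum>i<m. g' i x * h' i (r x))"
      by (auto simp: G_def K_def lessThan_atLeast0 intro!: sum.cong)
    finally show ?thesis .
  qed
  then have "(\<lambda>x. s x + t x) = (\<lambda>x. \<Sum>i<n+m. G i x * K i (r x))" by (auto simp: s t)
  moreover have "\<forall>i<n+m. G i \<in> Cb X \<and> K i \<in> C0 B"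
    using gh gh' by (auto simp: G_def K_def)
  ultimately show ?thesis unfolding Hspan_def
    by (intro CollectI exI[of _ "n+m"] exI[of _ G] exI[of _ K]) simp
qed

lemma HX_Cb: "a \<in> HX X B r \<Longrightarrow> a \<in> Cb X"
  by (simp add: HX_def)

lemma HX_zero_off: "a \<in> HX X B r \<Longrightarrow> x \<notin> topspace X \<Longrightarrow> a x = 0"
  by (simp add: HX_def Cb_def)

lemma HX_mult: assumes "a \<in> HX X B r" "k \<in> Cb X" shows "(\<lambda>x. a x * k x) \<in> HX X B r"
proof -
  obtain K where K: "K > 0" "\<forall>x. norm (k x) \<le> K" using Cb_bound assms(2) by blast
  have "\<exists>s\<in>Hspan X B r. \<forall>x\<in>topspace X. norm (a x * k x - s x) < e" if "e > 0" for e
  proof -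
    have "e / K > 0" using \<open>e > 0\<close> K by simp
    moreover have "\<forall>e>0. \<exists>s\<in>Hspan X B r. \<forall>x\<in>topspace X. norm (a x - s x) < e"
      using assms(1) by (simp add: HX_def)
    ultimately obtain s where s: "s \<in> Hspan X B r" "\<forall>x\<in>topspace X. norm (a x - s x) < e / K"
      by blast
    show ?thesis
    proof (intro bexI ballI)
      show "(\<lambda>x. s x * k x) \<in> Hspan X B r" using s assms by (intro Hspan_mult)
      fix x assume x: "x \<in> topspace X"
      have "norm (a x * k x - s x * k x) = norm (a x - s x) * norm (k x)"
        by (simp add: left_diff_distrib[symmetric] norm_mult)
      also have "\<dots> \<le> norm (a x - s x) * K" using K by (simp add: mult_left_mono)
      also have "\<dots> < e / K * K" using s x K by (intro mult_strict_right_mono) auto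
      finally show "norm (a x * k x - s x * k x) < e" using K by simp
    qed
  qed
  then show ?thesis using assms by (simp add: HX_def Cb_mult)
qed

lemma HX_add: assumes "a \<in> HX X B r" "b \<in> HX X B r" shows "(\<lambda>x. a x + b x) \<in> HX X B r"
proof -
  have "\<exists>s\<in>Hspan X B r. \<forall>x\<in>topspace X. norm (a x + b x - s x) < e" if "e > 0" for e
  proof -
    have e2: "e / 2 > 0" using \<open>e > 0\<close> by simp
    have "\<forall>e>0. \<exists>s\<in>Hspan X B r. \<forall>x\<in>topspace X. norm (a x - s x) < e"
      using assms(1) by (simp add: HX_def)
    then obtain s where s: "s \<in> Hspan X B r" "\<forall>x\<in>topspace X. norm (a x - s x) < e / 2"
      using e2 by blast
    have "\<forall>e>0. \<exists>s\<in>Hspan X B r. \<forall>x\<in>topspace X. norm (b x - s x) < e"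
      using assms(2) by (simp add: HX_def)
    then obtain t where t: "t \<in> Hspan X B r" "\<forall>x\<in>topspace X. norm (b x - t x) < e / 2"
      using e2 by blast
    show ?thesis
    proof (intro bexI ballI)
      show "(\<lambda>x. s x + t x) \<in> Hspan X B r" using s t by (intro Hspan_add)
      fix x assume x: "x \<in> topspace X"
      have "norm (a x + b x - (s x + t x)) \<le> norm (a x - s x) + norm (b x - t x)"
        by (metis add_diff_add norm_triangle_ineq)
      then show "norm (a x + b x - (s x + t x)) < e" using s t x by force
    qed
  qed
  then show ?thesis using assms by (simp add: HX_def Cb_add)
qed

lemma HX_scale: assumes "a \<in> HX X B r" shows "(\<lambda>x. c * a x) \<in> HX X B r"
proof -
  have "(\<lambda>x. c * a x) = (\<lambda>x. a x * cconst X c x)"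
    using assms by (auto simp: cconst_def HX_zero_off)
  then show ?thesis using HX_mult[OF assms Cb_const] by simp
qed

lemma HX_zero: "(\<lambda>x. 0) \<in> HX X B r"
proof -
  have "(\<lambda>x. 0) \<in> Hspan X B r"
    unfolding Hspan_def by (rule CollectI, rule exI[of _ "0::nat"]) simp
  then show ?thesis unfolding HX_def
    by (auto intro!: Cb_intro[where M=0] bexI[of _ "\<lambda>x. 0"])
qed

lemma HX_single: assumes "g \<in> Cb X" "h \<in> C0 B" shows "(\<lambda>x. g x * h (r x)) \<in> Hspan X B r"
  unfolding Hspan_def
  by (rule CollectI, rule exI[of _ "1::nat"],
      rule exI[of _ "\<lambda>i. g"], rule exI[of _ "\<lambda>i. h"]) (use assms in auto)

lemma HX_of_Hspan: "s \<in> Hspan X B r \<Longrightarrow> s \<in> Cb X \<Longrightarrow> s \<in> HX X B r"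
  unfolding HX_def by force

lemma HX_sum: "finite A \<Longrightarrow> (\<And>a. a \<in> A \<Longrightarrow> F a \<in> HX X B r) \<Longrightarrow> (\<lambda>x. \<Sum>a\<in>A. F a x) \<in> HX X B r"
proof (induction A rule: finite_induct)
  case empty then show ?case using HX_zero by simp
next
  case (insert a A)
  then show ?case using HX_add[of "F a" X B r "\<lambda>x. \<Sum>a\<in>A. F a x"] by simp
qed

locale chr =
  fixes X :: "'a topology" and B :: "'b topology" and r :: "'a \<Rightarrow> 'b"
    and p :: "('a \<Rightarrow> complex) \<Rightarrow> complex"
  assumes pc: "p \<in> characters (HX X B r)"
begin

abbreviation "H \<equiv> HX X B r"

lemma p_add: "a \<in> H \<Longrightarrow> b \<in> H \<Longrightarrow> p (\<lambda>x. a x + b x) = p a + p b"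
  using pc by (simp add: characters_def)

lemma p_scale: "a \<in> H \<Longrightarrow> p (\<lambda>x. c * a x) = c * p a"
  using pc by (simp add: characters_def)

lemma p_mult: "a \<in> H \<Longrightarrow> b \<in> H \<Longrightarrow> p (\<lambda>x. a x * b x) = p a * p b"
  using pc by (simp add: characters_def)

lemma p_nonzero: "\<exists>a\<in>H. p a \<noteq> 0"
  using pc by (simp add: characters_def)

lemma p_zero: "p (\<lambda>x. 0) = 0"
  using p_scale[OF HX_zero, of 0] by simp

lemma p_unit: obtains e where "e \<in> H" "p e = 1"
proof -
  obtain a where a: "a \<in> H" "p a \<noteq> 0" using p_nonzero by blast
  show ?thesis
    using that[of "\<lambda>x. inverse (p a) * a x"] a p_scale[of a "inverse (p a)"] HX_scale[OF a(1)]
    by simp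
qed

lemma p_ideal0: assumes "a \<in> H" "p a = 0" "k \<in> Cb X" shows "p (\<lambda>x. a x * k x) = 0"
proof -
  obtain e where e: "e \<in> H" "p e = 1" using p_unit by blast
  have ak: "(\<lambda>x. a x * k x) \<in> H" using assms HX_mult by blast
  have ke: "(\<lambda>x. e x * k x) \<in> H" using e assms HX_mult by blast
  have "p (\<lambda>x. a x * k x) = p (\<lambda>x. a x * k x) * p e" using e by simp
  also have "\<dots> = p (\<lambda>x. a x * k x * e x)" using p_mult[OF ak e(1)] by simp
  also have "(\<lambda>x. a x * k x * e x) = (\<lambda>x. a x * (e x * k x))" by (simp add: mult_ac)
  also have "p \<dots> = p a * p (\<lambda>x. e x * k x)" using p_mult[OF assms(1) ke] by simp
  finally show ?thesis using assms by simp
qed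

lemma p_sum: "finite A \<Longrightarrow> (\<And>a. a \<in> A \<Longrightarrow> F a \<in> H) \<Longrightarrow> p (\<lambda>x. \<Sum>a\<in>A. F a x) = (\<Sum>a\<in>A. p (F a))"
proof (induction A rule: finite_induct)
  case empty then show ?case using p_zero by simp
next
  case (insert a A)
  have "p (\<lambda>x. \<Sum>a\<in>insert a A. F a x) = p (\<lambda>x. F a x + (\<Sum>a\<in>A. F a x))"
    using insert by simp
  also have "\<dots> = p (F a) + p (\<lambda>x. \<Sum>a\<in>A. F a x)"
  proof -
    have "(\<lambda>x. \<Sum>a\<in>A. F a x) \<in> H" by (rule HX_sum) (use insert in auto)
    then show ?thesis using p_add[of "F a" "\<lambda>x. \<Sum>a\<in>A. F a x"] insert by simp
  qed
  finally show ?case using insert by simp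
qed

lemma specS:
  assumes a: "a \<in> H" and pa: "p a \<noteq> 0" and d: "\<delta> > 0"
  shows "\<exists>x\<in>topspace X. norm (a x - p a) < \<delta>"
proof (rule ccontr)
  define l where "l = p a"
  assume "\<not> ?thesis"
  then have far: "\<And>x. x \<in> topspace X \<Longrightarrow> norm (a x - l) \<ge> \<delta>" by (auto simp: l_def not_less)
  then have nz: "\<And>x. x \<in> topspace X \<Longrightarrow> a x - l \<noteq> 0" using d by fastforce
  define k where "k = (\<lambda>x. if x \<in> topspace X then inverse (a x - l) else 0)"
  have k: "k \<in> Cb X"
  proof (rule Cb_intro[where M="1/\<delta>"])
    have "continuous_map X euclidean (\<lambda>x. inverse (a x - l))"
      using a nz by (intro cm_inverse continuous_map_diff Cb_cont[OF HX_Cb[OF a]]) auto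
    then show "continuous_map X euclidean k"
      by (rule continuous_map_eq) (simp add: k_def)
    fix x assume x: "x \<in> topspace X"
    have "norm (inverse (a x - l)) = inverse (norm (a x - l))" by (simp add: norm_inverse)
    also have "\<dots> \<le> inverse \<delta>" using far[OF x] d by (intro le_imp_inverse_le) auto
    finally show "norm (k x) \<le> 1 / \<delta>" using x by (simp add: k_def divide_inverse)
  qed (simp add: k_def)
  define q where "q = (\<lambda>x. a x * k x)"
  have q: "q \<in> H" unfolding q_def using a k by (rule HX_mult)
  have eq: "a = (\<lambda>x. q x * a x + (- l) * q x)"
  proof
    fix x show "a x = q x * a x + (- l) * q x"
    proof (cases "x \<in> topspace X")
      case True
      then have "q x * a x + (- l) * q x = a x * inverse (a x - l) * (a x - l)"
        by (simp add: q_def k_def algebra_simps)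
      also have "\<dots> = a x" using nz[OF True] by simp
      finally show ?thesis by simp
    next
      case False then show ?thesis using a by (simp add: q_def k_def HX_zero_off)
    qed
  qed
  have "p a = p (\<lambda>x. q x * a x) + p (\<lambda>x. (- l) * q x)"
    by (subst eq, rule p_add) (use q a HX_mult[OF q HX_Cb[OF a]] HX_scale[OF q, of "-l"] in auto)
  also have "\<dots> = p q * l + (- l) * p q" by (metis l_def p_mult[OF q a] p_scale[OF q])
  finally have "p a = 0" by simp
  then show False using pa by simp
qed

lemma p_bound: assumes "a \<in> H" "\<And>x. norm (a x) \<le> M" shows "norm (p a) \<le> M"
proof (rule ccontr)
  assume "\<not> ?thesis"
  have "M \<ge> 0" using assms(2)[of undefined] norm_ge_zero[of "a undefined"] by linarith
  with \<open>\<not> ?thesis\<close> have pa: "p a \<noteq> 0" "norm (p a) - M > 0" by auto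
  obtain x where "norm (a x - p a) < norm (p a) - M" using specS[OF assms(1) pa] by blast
  moreover have "norm (p a) \<le> norm (a x) + norm (a x - p a)" by (metis norm_triangle_sub add.commute norm_minus_commute)
  ultimately show False using assms(2)[of x] by linarith
qed

end

context chr
begin

lemma density:
  assumes A: "finite A" "A \<subseteq> H" and eps: "\<epsilon> > 0"
  shows "\<exists>x\<in>topspace X. \<forall>a\<in>A. norm (a x - p a) < \<epsilon>"
proof -
  obtain e where e: "e \<in> H" "p e = 1" using p_unit by blast
  obtain M where M: "M > 0" "\<And>x. norm (e x) \<le> M" using Cb_bound[OF HX_Cb[OF e(1)]] by blast
  define D where "D = (\<lambda>a x. a x + (- p a) * e x)"
  have D: "D a \<in> H" "p (D a) = 0" if "a \<in> A" for a
  proof -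
    have a: "a \<in> H" using that A by auto
    show "D a \<in> H" unfolding D_def by (intro HX_add a HX_scale e)
    show "p (D a) = 0" unfolding D_def using p_add[OF a HX_scale[OF e(1), of "- p a"]] p_scale[OF e(1), of "- p a"] e by simp
  qed
  define E where "E = (\<lambda>x. e x + (- 1) * (e x * e x))"
  have ee: "(\<lambda>x. e x * e x) \<in> H" using HX_mult[OF e(1) HX_Cb[OF e(1)]] .
  have E: "E \<in> H" "p E = 0"
  proof -
    show "E \<in> H" unfolding E_def by (intro HX_add e HX_scale ee)
    show "p E = 0" unfolding E_def using p_add[OF e(1) HX_scale[OF ee, of "-1"]] p_scale[OF ee, of "-1"] p_mult[OF e(1) e(1)] e
      by simp
  qed
  define T where "T = (\<lambda>a x. D a x * cnj (D a x))"
  have T: "T a \<in> H" "p (T a) = 0" if "a \<in> A" for a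
    using D[OF that] HX_mult[OF D(1)[OF that] Cb_cnj[OF HX_Cb[OF D(1)[OF that]]]]
      p_ideal0[OF D(1)[OF that] D(2)[OF that] Cb_cnj[OF HX_Cb[OF D(1)[OF that]]]]
    by (auto simp: T_def)
  define TE where "TE = (\<lambda>x. E x * cnj (E x))"
  have TE: "TE \<in> H" "p TE = 0"
    using HX_mult[OF E(1) Cb_cnj[OF HX_Cb[OF E(1)]]] p_ideal0[OF E(1) E(2) Cb_cnj[OF HX_Cb[OF E(1)]]]
    by (auto simp: TE_def)
  define d where "d = (\<lambda>x. (\<Sum>a\<in>A. T a x) + TE x)"
  have sumT: "(\<lambda>x. \<Sum>a\<in>A. T a x) \<in> H" using T A by (intro HX_sum) auto
  have d: "d \<in> H" "p d = 0"
  proof -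
    show "d \<in> H" unfolding d_def using sumT TE by (intro HX_add)
    have "p d = p (\<lambda>x. \<Sum>a\<in>A. T a x) + p TE" unfolding d_def by (rule p_add[OF sumT TE(1)])
    also have "p (\<lambda>x. \<Sum>a\<in>A. T a x) = (\<Sum>a\<in>A. p (T a))" using T A by (intro p_sum) auto
    finally show "p d = 0" using T TE by simp
  qed
  define \<Lambda> where "\<Lambda> = (\<Sum>a\<in>A. norm (p a))"
  have \<Lambda>: "\<Lambda> \<ge> 0" unfolding \<Lambda>_def by (simp add: sum_nonneg)
  define \<epsilon>' where "\<epsilon>' = \<epsilon> / (1 + 2 * \<Lambda>)"
  have \<epsilon>': "\<epsilon>' > 0" using eps \<Lambda> by (simp add: \<epsilon>'_def)
  define C where "C = M / \<epsilon>'^2 + 1"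
  have C: "C > 0" "M < C * \<epsilon>'^2"
  proof -
    show "C > 0" using M \<epsilon>' by (simp add: C_def add_pos_nonneg)
    have "C * \<epsilon>'^2 = M + \<epsilon>'^2" using \<epsilon>' by (simp add: C_def field_simps)
    then show "M < C * \<epsilon>'^2" using \<epsilon>' by simp
  qed
  define w where "w = (\<lambda>x. e x + (- of_real C) * d x)"
  have w: "w \<in> H" "p w = 1"
  proof -
    show "w \<in> H" unfolding w_def by (intro HX_add e HX_scale d)
    show "p w = 1" unfolding w_def using p_add[OF e(1) HX_scale[OF d(1), of "- of_real C"]] p_scale[OF d(1), of "- of_real C"] d e by simp
  qed
  have "\<exists>x\<in>topspace X. norm (w x - p w) < 1/2" by (rule specS[OF w(1)]) (use w(2) in auto)
  then obtain x where x: "x \<in> topspace X" "norm (w x - 1) < 1/2" using w(2) by auto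
  define R where "R = (\<Sum>a\<in>A. (norm (D a x))^2) + (norm (E x))^2"
  have R0: "R \<ge> 0" unfolding R_def by (intro add_nonneg_nonneg sum_nonneg) auto
  have dR: "d x = of_real R"
  proof -
    have Tx: "T a x = of_real ((norm (D a x))^2)" for a by (simp only: T_def complex_norm_square)
    have TEx: "TE x = of_real ((norm (E x))^2)" by (simp only: TE_def complex_norm_square)
    show ?thesis unfolding d_def R_def Tx TEx of_real_add of_real_sum ..
  qed
  have "Re (w x) > 1/2"
  proof -
    have "\<bar>Re (w x - 1)\<bar> < 1/2" using x(2) abs_Re_le_cmod[of "w x - 1"] by linarith
    then have "-(1/2) < Re (w x - 1)" by (simp only: abs_less_iff) linarith
    then show ?thesis by simp
  qed
  then have Rew: "Re (e x) - C * R > 1/2" by (simp add: w_def dR)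
  have "Re (e x) \<le> M" using M(2)[of x] complex_Re_le_cmod[of "e x"] by linarith
  then have "C * R < M" using Rew by linarith
  then have "C * R < C * \<epsilon>'^2" using C by linarith
  then have R: "R < \<epsilon>'^2" using C(1) by simp
  have Dsmall: "norm (D a x) < \<epsilon>'" if "a \<in> A" for a
  proof -
    have "(norm (D a x))^2 \<le> (\<Sum>a\<in>A. (norm (D a x))^2)"
      using that A(1) by (intro member_le_sum) auto
    moreover have "(\<Sum>a\<in>A. (norm (D a x))^2) \<le> R" unfolding R_def by simp
    ultimately have "(norm (D a x))^2 < \<epsilon>'^2" using R by linarith
    then show ?thesis using \<epsilon>' by (simp add: power_less_imp_less_base)
  qed
  have Esmall: "norm (E x) < \<epsilon>'"
  proof -
    have "(\<Sum>a\<in>A. (norm (D a x))^2) \<ge> 0" by (intro sum_nonneg) auto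
    then have "(norm (E x))^2 \<le> R" unfolding R_def by linarith
    then have "(norm (E x))^2 < \<epsilon>'^2" using R by linarith
    then show ?thesis using \<epsilon>' by (simp add: power_less_imp_less_base)
  qed
  have ebig: "norm (e x) > 1/2"
  proof -
    have "C * R \<ge> 0" using C(1) R0 by simp
    then show ?thesis using Rew complex_Re_le_cmod[of "e x"] by linarith
  qed
  have "E x = e x * (1 - e x)" by (simp add: E_def algebra_simps)
  then have "norm (e x) * norm (1 - e x) < \<epsilon>'" using Esmall by (simp add: norm_mult)
  moreover have "(1/2) * norm (1 - e x) \<le> norm (e x) * norm (1 - e x)"
    using ebig by (intro mult_right_mono) auto
  ultimately have "(1/2) * norm (1 - e x) < \<epsilon>'" by linarith
  then have e1: "norm (1 - e x) < 2 * \<epsilon>'" by simp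
  show ?thesis
  proof (intro bexI[OF _ x(1)] ballI)
    fix a assume a: "a \<in> A"
    have "a x - p a = D a x + p a * (e x - 1)" by (simp add: D_def algebra_simps)
    then have "norm (a x - p a) \<le> norm (D a x) + norm (p a) * norm (1 - e x)"
      by (metis norm_triangle_ineq norm_mult norm_minus_commute)
    also have "\<dots> \<le> norm (D a x) + \<Lambda> * (2 * \<epsilon>')"
    proof -
      have "norm (p a) \<le> \<Lambda>" unfolding \<Lambda>_def using a A(1) by (intro member_le_sum) auto
      then show ?thesis using e1 \<Lambda> by (intro add_left_mono mult_mono) auto
    qed
    also have "\<dots> < \<epsilon>' + \<Lambda> * (2 * \<epsilon>')" using Dsmall[OF a] by simp
    also have "\<dots> = \<epsilon>' * (1 + 2 * \<Lambda>)" by (simp add: algebra_simps)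
    also have "\<dots> = \<epsilon>" using \<Lambda> by (simp add: \<epsilon>'_def)
    finally show "norm (a x - p a) < \<epsilon>" .
  qed
qed

end

lemma completely_regular_LCH: "locally_compact_space B \<Longrightarrow> Hausdorff_space B \<Longrightarrow> completely_regular_space B"
  by (simp add: locally_compact_regular_imp_completely_regular_space)

lemma Urysohn_compact:
  assumes LC: "locally_compact_space B" and HB: "Hausdorff_space B" and K: "compactin B K"
  obtains h where "h \<in> C0 B" "\<And>y. y \<in> K \<Longrightarrow> h y = 1" "\<And>y. norm (h y) \<le> 1"
    "\<And>y. y \<in> topspace B \<Longrightarrow> h y \<in> complex_of_real ` {0..1}"
proof -
  have CR: "completely_regular_space B" using LC HB by (rule completely_regular_LCH)
  obtain U L where UL: "openin B U" "compactin B L" "closedin B L" "K \<subseteq> U" "U \<subseteq> L"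
    using LC K HB locally_compact_space_compact_closed_compact by metis
  have T: "closedin B (topspace B - U)" using UL(1) by blast
  have dj: "disjnt K (topspace B - U)" using UL(4) by (auto simp: disjnt_def)
  obtain f0 where f0: "continuous_map B (subtopology euclidean {0..1::real}) f0"
    "f0 ` (topspace B - U) \<subseteq> {0}" "f0 ` K \<subseteq> {1}"
    using Urysohn_completely_regular_compact_closed[OF _ CR K T dj, of 0 1] by auto
  have f0r: "continuous_map B euclideanreal f0" and f0i: "\<And>y. y \<in> topspace B \<Longrightarrow> f0 y \<in> {0..1}"
    using f0(1) by (auto simp: continuous_map_in_subtopology)
  define h where "h = (\<lambda>y. if y \<in> topspace B then complex_of_real (f0 y) else 0)"
  show ?thesis
  proof
    have "continuous_map B euclidean h"
      by (rule continuous_map_eq[OF cm_of_real[OF f0r]]) (simp add: h_def)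
    moreover have "\<exists>K'. compactin B K' \<and> (\<forall>y \<in> topspace B - K'. norm (h y) < e)" if "e > 0" for e
    proof (intro exI conjI ballI)
      show "compactin B L" by (rule UL(2))
      fix y assume "y \<in> topspace B - L"
      then have "f0 y = 0" using f0(2) UL(5) by auto
      then show "norm (h y) < e" using that by (simp add: h_def)
    qed
    ultimately show "h \<in> C0 B" by (simp add: C0_def h_def)
    show "h y = 1" if "y \<in> K" for y
      using that f0(3) compactin_subset_topspace[OF K] by (auto simp: h_def)
    show "norm (h y) \<le> 1" for y using f0i[of y] by (auto simp: h_def)
    show "h y \<in> complex_of_real ` {0..1}" if "y \<in> topspace B" for y using f0i[OF that] that by (auto simp: h_def)
  qed
qed

locale bsetupA =
  fixes X :: "'a topology" and B :: "'b topology" and r :: "'a \<Rightarrow> 'b"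
  assumes LC: "locally_compact_space B" and HB: "Hausdorff_space B" and rc: "continuous_map X B r"
begin

abbreviation "H \<equiv> HX X B r"
abbreviation "S \<equiv> characters (HX X B r)"
abbreviation "bX \<equiv> betaB X B r"
abbreviation "ii \<equiv> betaI X B r"

lemma hr_Cb: assumes "h \<in> C0 B" "\<And>y. norm (h y) \<le> 1" "g \<in> Cb X"
  shows "(\<lambda>z. g z * h (r z)) \<in> Cb X" "(\<lambda>z. g z * h (r z)) \<in> H"
proof -
  define k where "k = (\<lambda>z. if z \<in> topspace X then h (r z) else 0)"
  have "k \<in> Cb X"
  proof (rule Cb_intro[where M=1])
    have "continuous_map X euclidean (h \<circ> r)"
      using assms(1) rc by (intro continuous_map_compose[of _ B]) (auto simp: C0_def)
    then show "continuous_map X euclidean k" by (rule continuous_map_eq) (simp add: k_def)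
  qed (auto simp: k_def assms(2))
  moreover have "(\<lambda>z. g z * h (r z)) = (\<lambda>z. g z * k z)"
    using assms(3) by (auto simp: k_def Cb_zero)
  ultimately show *: "(\<lambda>z. g z * h (r z)) \<in> Cb X" using Cb_mult assms(3) by metis
  show "(\<lambda>z. g z * h (r z)) \<in> H" using * HX_single[OF assms(3,1)] by (intro HX_of_Hspan)
qed

lemma ii_char: assumes x: "x \<in> topspace X" shows "ii x \<in> S"
proof -
  have rx: "compactin B {r x}" using rc x by (auto simp: continuous_map_def)
  obtain h where h: "h \<in> C0 B" "h (r x) = 1" "\<And>y. norm (h y) \<le> 1"
    using Urysohn_compact[OF LC HB rx] by (metis insertI1)
  have a: "(\<lambda>z. cconst X 1 z * h (r z)) \<in> H" using hr_Cb[OF h(1) h(3) Cb_const] by blast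
  have "ii x (\<lambda>z. cconst X 1 z * h (r z)) \<noteq> 0"
    using a x h(2) by (simp add: betaI_def cconst_def)
  then have ex: "\<exists>a\<in>H. ii x a \<noteq> 0" using a by blast
  show ?thesis unfolding characters_def mem_Collect_eq
  proof (intro conjI ballI allI ex)
    show "ii x \<in> extensional H" by (simp add: betaI_def)
    fix a b assume "a \<in> H" "b \<in> H"
    then show "ii x (\<lambda>x. a x + b x) = ii x a + ii x b" "ii x (\<lambda>x. a x * b x) = ii x a * ii x b"
      by (simp_all add: betaI_def HX_add HX_mult HX_Cb)
  next
    fix a c assume "a \<in> H"
    then show "ii x (\<lambda>x. c * a x) = c * ii x a" by (simp add: betaI_def HX_scale)
  qed
qed

lemma topspace_bX: "topspace bX = S"
  by (auto simp: betaB_def characters_def PiE_def extensional_def)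

lemma ii_top: "x \<in> topspace X \<Longrightarrow> ii x \<in> topspace bX"
  using ii_char topspace_bX by auto

lemma ii_eval: "a \<in> H \<Longrightarrow> ii x a = a x"
  by (simp add: betaI_def)

lemma eval_cont: "a \<in> H \<Longrightarrow> continuous_map bX euclidean (\<lambda>q. q a)"
  unfolding betaB_def
  by (intro continuous_map_from_subtopology continuous_map_product_projection[where X="\<lambda>_. euclidean"])

lemma basic_nbhd:
  assumes W: "openin bX W" and pW: "p \<in> W"
  shows "\<exists>A \<epsilon>. finite A \<and> A \<subseteq> H \<and> \<epsilon> > 0 \<and> (\<forall>q\<in>S. (\<forall>a\<in>A. norm (q a - p a) < \<epsilon>) \<longrightarrow> q \<in> W)"
proof -
  obtain W' where W': "openin (product_topology (\<lambda>_. euclidean) H) W'" "W = W' \<inter> S"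
    using W unfolding betaB_def openin_subtopology by blast
  then obtain U where U: "finite {i \<in> H. U i \<noteq> UNIV}" "\<forall>i\<in>H. open (U i)" "p \<in> PiE H U" "PiE H U \<subseteq> W'"
    using pW unfolding openin_product_topology_alt by fastforce
  define A where "A = {i \<in> H. U i \<noteq> UNIV}"
  have "\<forall>a\<in>A. \<exists>e>0. ball (p a) e \<subseteq> U a"
    using U(2,3) by (auto simp: A_def PiE_iff open_contains_ball)
  then obtain ef where ef: "\<And>a. a \<in> A \<Longrightarrow> ef a > 0 \<and> ball (p a) (ef a) \<subseteq> U a" by metis
  define \<epsilon> where "\<epsilon> = Min (insert 1 (ef ` A))"
  have fA: "finite A" using U(1) by (simp add: A_def)
  have \<epsilon>: "\<epsilon> > 0" using fA ef by (auto simp: \<epsilon>_def)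
  have \<epsilon>le: "\<epsilon> \<le> ef a" if "a \<in> A" for a using fA that by (simp add: \<epsilon>_def)
  show ?thesis
  proof (intro exI conjI ballI impI)
    show "finite A" "A \<subseteq> H" "\<epsilon> > 0" using fA \<epsilon> by (auto simp: A_def)
    fix q assume q: "q \<in> S" "\<forall>a\<in>A. norm (q a - p a) < \<epsilon>"
    have "q \<in> PiE H U"
    proof (rule PiE_I)
      fix i assume i: "i \<in> H"
      show "q i \<in> U i"
      proof (cases "i \<in> A")
        case True
        then have "q i \<in> ball (p i) (ef i)"
          using q(2) \<epsilon>le[OF True] by (auto simp: dist_norm norm_minus_commute)
        then show ?thesis using ef[OF True] by blast
      next
        case False then show ?thesis using i by (auto simp: A_def)
      qed
    next
      fix i assume "i \<notin> H" then show "q i = undefined" using q(1) by (auto simp: characters_def extensional_def)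
    qed
    then show "q \<in> W" using U(4) W'(2) q(1) by blast
  qed
qed

lemma dense_ii: assumes "openin bX W" "p \<in> W" shows "\<exists>x\<in>topspace X. ii x \<in> W"
proof -
  obtain A \<epsilon> where A: "finite A" "A \<subseteq> H" "\<epsilon> > 0" "\<forall>q\<in>S. (\<forall>a\<in>A. norm (q a - p a) < \<epsilon>) \<longrightarrow> q \<in> W"
    using basic_nbhd[OF assms] by blast
  have pS: "p \<in> S" using assms openin_subset topspace_bX by blast
  obtain x where x: "x \<in> topspace X" "\<forall>a\<in>A. norm (a x - p a) < \<epsilon>"
    using chr.density[OF chr.intro[OF pS] A(1-3)] by blast
  have "ii x \<in> W" using A(4) ii_char[OF x(1)] x(2) A(2) by (auto simp: ii_eval subset_iff)
  then show ?thesis using x(1) by blast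
qed

lemma agree:
  assumes HZ: "Hausdorff_space Z" and g1: "continuous_map bX Z g1" and g2: "continuous_map bX Z g2"
    and eq: "\<And>x. x \<in> topspace X \<Longrightarrow> g1 (ii x) = g2 (ii x)" and p: "p \<in> topspace bX"
  shows "g1 p = g2 p"
proof (rule ccontr)
  assume ne: "g1 p \<noteq> g2 p"
  have "g1 p \<in> topspace Z" "g2 p \<in> topspace Z" using g1 g2 p by (auto simp: continuous_map_def)
  then obtain V1 V2 where V: "openin Z V1" "openin Z V2" "g1 p \<in> V1" "g2 p \<in> V2" "disjnt V1 V2"
    using HZ ne unfolding Hausdorff_space_def by metis
  define W where "W = {q \<in> topspace bX. g1 q \<in> V1} \<inter> {q \<in> topspace bX. g2 q \<in> V2}"
  have "openin bX W" unfolding W_def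
    using V g1 g2 by (intro openin_Int openin_continuous_map_preimage) auto
  moreover have "p \<in> W" using p V by (simp add: W_def)
  ultimately obtain x where x: "x \<in> topspace X" "ii x \<in> W" using dense_ii by blast
  then show False using eq[OF x(1)] V(5) by (auto simp: W_def disjnt_def)
qed

end

lemma closedin_zeros:
  assumes "\<And>t. t \<in> I \<Longrightarrow> continuous_map X euclidean (F t :: _ \<Rightarrow> complex)"
  shows "closedin X {x \<in> topspace X. \<forall>t\<in>I. F t x = 0}"
proof -
  have eq: "{x \<in> topspace X. \<forall>t\<in>I. F t x = 0} = topspace X - (\<Union>t\<in>I. {x \<in> topspace X. F t x \<in> - {0}})"
    by auto
  have "openin X (\<Union>t\<in>I. {x \<in> topspace X. F t x \<in> - {0}})"
  proof -
    have "openin X {x \<in> topspace X. F t x \<in> - {0}}" if "t \<in> I" for t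
      using openin_continuous_map_preimage[OF assms[OF that], of "- {0}"] by (simp add: open_Compl)
    then show ?thesis by (intro openin_Union) blast
  qed
  then show ?thesis unfolding eq by (intro closedin_diff) auto
qed

locale bsetupB = bsetupA X B r
  for X :: "'a topology" and B :: "'b topology" and r :: "'a \<Rightarrow> 'b" +
  fixes Y :: "'c topology" and r' :: "'c \<Rightarrow> 'b" and f :: "'a \<Rightarrow> 'c"
  assumes HY: "Hausdorff_space Y" and r'c: "continuous_map Y B r'" and r'p: "proper_map Y B r'"
    and fc: "continuous_map X Y f" and comm: "\<forall>x \<in> topspace X. r' (f x) = r x"
begin

lemma preim_compact: "compactin B K \<Longrightarrow> compactin Y {z \<in> topspace Y. r' z \<in> K}"
  using r'p by (simp add: proper_map_alt)

lemma LCY: "locally_compact_space Y"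
  unfolding locally_compact_space_def
proof (intro strip)
  fix y assume y: "y \<in> topspace Y"
  then have "r' y \<in> topspace B" using r'c by (auto simp: continuous_map_def)
  then obtain U K where UK: "openin B U" "compactin B K" "r' y \<in> U" "U \<subseteq> K"
    using LC unfolding locally_compact_space_def by metis
  show "\<exists>U K. openin Y U \<and> compactin Y K \<and> y \<in> U \<and> U \<subseteq> K"
  proof (intro exI conjI)
    show "openin Y {z \<in> topspace Y. r' z \<in> U}" using UK(1) r'c by (rule openin_continuous_map_preimage[rotated])
    show "compactin Y {z \<in> topspace Y. r' z \<in> K}" using UK(2) by (rule preim_compact)
  qed (use y UK in auto)
qed

lemma Urysohn_Y:
  assumes V: "openin Y V" and y: "y \<in> V"
  obtains g :: "'c \<Rightarrow> complex" and L where "continuous_map Y euclidean g" "g y = 1" "compactin Y L" "L \<subseteq> V"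
    "\<And>z. z \<notin> L \<Longrightarrow> g z = 0" "\<And>z. norm (g z) \<le> 1"
proof -
  have reg: "regular_space Y" using LCY HY locally_compact_Hausdorff_imp_regular_space by blast
  have CR: "completely_regular_space Y" using LCY HY by (rule completely_regular_LCH)
  have "neighbourhood_base_of (\<lambda>C. compactin Y C \<and> closedin Y C) Y"
    using LCY reg locally_compact_regular_space_neighbourhood_base by blast
  then obtain U L where UL: "openin Y U" "compactin Y L" "closedin Y L" "y \<in> U" "U \<subseteq> L" "L \<subseteq> V"
    using V y unfolding neighbourhood_base_of by metis
  have yt: "y \<in> topspace Y" using UL openin_subset by blast
  have T: "closedin Y (topspace Y - U)" using UL(1) by blast
  have dj: "disjnt {y} (topspace Y - U)" using UL(4) by (auto simp: disjnt_def)
  obtain f0 where f0: "continuous_map Y (subtopology euclidean {0..1::real}) f0"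
    "f0 ` (topspace Y - U) \<subseteq> {0}" "f0 ` {y} \<subseteq> {1}"
    using Urysohn_completely_regular_compact_closed[OF _ CR _ T dj, of 0 1] yt by auto
  have f0r: "continuous_map Y euclideanreal f0" and f0i: "\<And>z. z \<in> topspace Y \<Longrightarrow> f0 z \<in> {0..1}"
    using f0(1) by (auto simp: continuous_map_in_subtopology)
  define g where "g = (\<lambda>z. if z \<in> topspace Y then complex_of_real (f0 z) else 0)"
  show ?thesis
  proof (rule that[of g L])
    show "continuous_map Y euclidean g"
      by (rule continuous_map_eq[OF cm_of_real[OF f0r]]) (simp add: g_def)
    show "g y = 1" using f0(3) yt by (simp add: g_def)
    show "compactin Y L" "L \<subseteq> V" using UL by auto
    show "g z = 0" if "z \<notin> L" for z using that f0(2) UL(5) by (auto simp: g_def)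
    show "norm (g z) \<le> 1" for z using f0i[of z] by (auto simp: g_def)
  qed
qed

definition comp_f :: "('c \<Rightarrow> complex) \<Rightarrow> 'a \<Rightarrow> complex" where
  "comp_f g = (\<lambda>x. if x \<in> topspace X then g (f x) else 0)"

lemma comp_H:
  assumes g: "continuous_map Y euclidean g" "\<And>z. norm (g z) \<le> 1" and L: "compactin Y L"
    "\<And>z. z \<notin> L \<Longrightarrow> g z = 0"
  shows "comp_f g \<in> H"
proof -
  have K: "compactin B (r' ` L)" using L(1) r'c by (rule image_compactin)
  obtain h where h: "h \<in> C0 B" "\<And>y. y \<in> r' ` L \<Longrightarrow> h y = 1" "\<And>y. norm (h y) \<le> 1"
    "\<And>y. y \<in> topspace B \<Longrightarrow> h y \<in> complex_of_real ` {0..1}"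
    using Urysohn_compact[OF LC HB K] by blast
  have G: "comp_f g \<in> Cb X"
  proof (rule Cb_intro[where M=1])
    show "continuous_map X euclidean (comp_f g)"
      by (rule continuous_map_eq[OF continuous_map_compose[OF fc g(1)]]) (simp add: comp_f_def)
  qed (auto simp: comp_f_def g(2))
  have "comp_f g = (\<lambda>z. comp_f g z * h (r z))"
  proof
    fix x show "comp_f g x = comp_f g x * h (r x)"
    proof (cases "x \<in> topspace X \<and> f x \<in> L")
      case True
      then have "r x \<in> r' ` L" using comm by (metis image_eqI)
      then have "h (r x) = 1" by (rule h(2))
      then show ?thesis by simp
    next
      case False then show ?thesis using L(2) by (auto simp: comp_f_def)
    qed
  qed
  then show ?thesis using hr_Cb(2)[OF h(1) h(3) G] by simp
qed

definition cluster :: "(('a \<Rightarrow> complex) \<Rightarrow> complex) \<Rightarrow> 'c \<Rightarrow> bool" where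
  "cluster p y \<longleftrightarrow> y \<in> topspace Y \<and>
     (\<forall>a\<in>H. \<forall>\<epsilon>>0. y \<in> Y closure_of (f ` {x \<in> topspace X. norm (a x - p a) < \<epsilon>}))"

lemma key:
  assumes cl: "cluster p y" and g: "continuous_map Y euclidean g" and G: "comp_f g \<in> H"
  shows "p (comp_f g) = g y"
proof (rule ccontr)
  assume ne: "p (comp_f g) \<noteq> g y"
  define \<epsilon> where "\<epsilon> = norm (p (comp_f g) - g y) / 2"
  have \<epsilon>: "\<epsilon> > 0" using ne by (simp add: \<epsilon>_def)
  define SS where "SS = f ` {x \<in> topspace X. norm (comp_f g x - p (comp_f g)) < \<epsilon>}"
  define NN where "NN = {z \<in> topspace Y. g z \<in> ball (g y) \<epsilon>}"
  have yc: "y \<in> Y closure_of SS"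
    using cl G \<epsilon> unfolding cluster_def SS_def by blast
  have N: "openin Y NN"
    unfolding NN_def using g by (intro openin_continuous_map_preimage) auto
  have yN: "y \<in> NN" using cl \<epsilon> by (simp add: cluster_def NN_def)
  have "\<forall>T. y \<in> T \<and> openin Y T \<longrightarrow> (\<exists>z. z \<in> SS \<and> z \<in> T)"
    using yc unfolding in_closure_of by (rule conjunct2)
  then have "\<exists>z. z \<in> SS \<and> z \<in> NN" using yN N by blast
  then obtain z where z: "z \<in> SS" "z \<in> NN" by blast
  then obtain x where x0: "x \<in> topspace X" "norm (comp_f g x - p (comp_f g)) < \<epsilon>" "z = f x"
    unfolding SS_def by blast
  have x: "norm (g (f x) - p (comp_f g)) < \<epsilon>" "norm (g y - g (f x)) < \<epsilon>"
    using x0 z(2) by (simp_all add: comp_f_def dist_norm NN_def)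
  have "norm (p (comp_f g) - g y) \<le> norm (p (comp_f g) - g (f x)) + norm (g (f x) - g y)"
    using norm_triangle_ineq[of "p (comp_f g) - g (f x)" "g (f x) - g y"] by simp
  then have "norm (p (comp_f g) - g y) \<le> norm (g (f x) - p (comp_f g)) + norm (g y - g (f x))"
    by (simp only: norm_minus_commute)
  then have "norm (p (comp_f g) - g y) < 2 * \<epsilon>" using x by linarith
  then show False by (simp add: \<epsilon>_def)
qed

end

context bsetupB
begin

lemma approx_compact:
  assumes e: "e \<in> H"
  shows "\<exists>L. compactin Y L \<and> (\<forall>x\<in>topspace X. norm (e x - 1) < 1/2 \<longrightarrow> f x \<in> L)"
proof -
  have "\<forall>e>0. \<exists>s\<in>Hspan X B r. \<forall>x\<in>topspace X. norm (e' x - s x) < e" if "e' \<in> H" for e'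
    using that by (simp add: HX_def)
  then obtain s where s: "s \<in> Hspan X B r" "\<forall>x\<in>topspace X. norm (e x - s x) < 1/4"
    using e by (meson zero_less_divide_1_iff zero_less_numeral)
  obtain n :: nat and g h where sdef: "s = (\<lambda>x. \<Sum>i<n. g i x * h i (r x))"
    and gh: "\<forall>i<n. g i \<in> Cb X \<and> h i \<in> C0 B"
    using s(1) unfolding Hspan_def by blast
  have "\<forall>i\<in>{..<n}. \<exists>M>0. \<forall>x. norm (g i x) \<le> M" using gh Cb_bound by blast
  then obtain Mf where Mf: "\<And>i. i < n \<Longrightarrow> Mf i > 0 \<and> (\<forall>x. norm (g i x) \<le> Mf i)"
    by (metis lessThan_iff)
  define Mt where "Mt = (\<Sum>i<n. Mf i) + 1"
  have "(\<Sum>i<n. Mf i) \<ge> 0" by (rule sum_nonneg) (use Mf in \<open>auto simp: less_imp_le\<close>)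
  then have Mt: "Mt > 0" by (simp add: Mt_def)
  define \<eta> where "\<eta> = 1 / (4 * Mt)"
  have \<eta>: "\<eta> > 0" using Mt by (simp add: \<eta>_def)
  have "\<forall>i\<in>{..<n}. \<exists>K. compactin B K \<and> (\<forall>y\<in>topspace B - K. norm (h i y) < \<eta>)"
    using gh \<eta> by (simp add: C0_def)
  then obtain Kf where Kf: "\<And>i. i < n \<Longrightarrow> compactin B (Kf i) \<and> (\<forall>y\<in>topspace B - Kf i. norm (h i y) < \<eta>)"
    by (metis lessThan_iff)
  define K where "K = (\<Union>i<n. Kf i)"
  have K: "compactin B K" unfolding K_def using Kf by (intro compactin_Union) auto
  define L where "L = {z \<in> topspace Y. r' z \<in> K}"
  show ?thesis
  proof (intro exI conjI ballI impI)
    show "compactin Y L" unfolding L_def by (rule preim_compact[OF K])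
    fix x assume x: "x \<in> topspace X" and ex: "norm (e x - 1) < 1/2"
    have rx: "r x \<in> topspace B" using rc x by (auto simp: continuous_map_def)
    have "r x \<in> K"
    proof (rule ccontr)
      assume "r x \<notin> K"
      then have hs: "norm (h i (r x)) < \<eta>" if "i < n" for i using Kf[OF that] rx that by (auto simp: K_def)
      have "norm (s x) \<le> (\<Sum>i<n. norm (g i x * h i (r x)))" unfolding sdef by (rule norm_sum)
      also have "\<dots> \<le> (\<Sum>i<n. Mf i * \<eta>)"
        unfolding norm_mult using Mf hs by (intro sum_mono mult_mono) (auto simp: less_imp_le)
      also have "\<dots> = (\<Sum>i<n. Mf i) * \<eta>" by (simp add: sum_distrib_right)
      also have "\<dots> < Mt * \<eta>" using \<eta> by (simp add: Mt_def)
      also have "\<dots> = 1/4" using Mt by (simp add: \<eta>_def)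
      finally have s1: "norm (s x) < 1/4" .
      have "norm (e x) \<le> norm (s x) + norm (e x - s x)" by (metis add.commute diff_add_cancel norm_triangle_ineq)
      moreover have "1 \<le> norm (e x) + norm (e x - 1)"
        using norm_triangle_ineq[of "e x" "1 - e x"] by (simp add: norm_minus_commute)
      ultimately show False using s1 s(2) x ex by fastforce
    qed
    then show "f x \<in> L" using x fc comm by (auto simp: L_def continuous_map_def)
  qed
qed


lemma cluster_exists:
  assumes pS: "p \<in> S"
  shows "\<exists>y. cluster p y"
proof -
  obtain e where e: "e \<in> H" "p e = 1" using chr.p_unit[OF chr.intro[OF pS]] by blast
  obtain L where L: "compactin Y L" "\<And>x. x \<in> topspace X \<Longrightarrow> norm (e x - 1) < 1/2 \<Longrightarrow> f x \<in> L"
    using approx_compact[OF e(1)] by blast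
  have LY: "L \<subseteq> topspace Y" using L(1) by (rule compactin_subset_topspace)
  have Lc: "closedin Y L" using HY L(1) by (rule compactin_imp_closedin)
  define Idx :: "(('a \<Rightarrow> complex) set \<times> real) set" where "Idx = {(A,\<epsilon>). finite A \<and> A \<subseteq> H \<and> \<epsilon> > 0}"
  define Us where "Us = (\<lambda>A \<epsilon>. {x\<in>topspace X. \<forall>a\<in>insert e A. norm (a x - p a) < min \<epsilon> (1/2)})"
  define CC where "CC = (\<lambda>(A,\<epsilon>). Y closure_of (f ` Us A \<epsilon>))"
  define \<U> where "\<U> = CC ` Idx"
  have UsL: "f ` Us A \<epsilon> \<subseteq> L" for A \<epsilon>
  proof
    fix z assume "z \<in> f ` Us A \<epsilon>"
    then obtain x where x: "x \<in> topspace X" "norm (e x - p e) < min \<epsilon> (1/2)" "z = f x"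
      by (auto simp: Us_def)
    then show "z \<in> L" using L(2)[OF x(1)] e(2) by simp
  qed
  have CCL: "CC (A,\<epsilon>) \<subseteq> L" for A \<epsilon> unfolding CC_def using UsL Lc by (simp add: closure_of_minimal)
  have cpt: "compact_space (subtopology Y L)" using L(1) by (simp add: compactin_subspace)
  have clo: "\<forall>C\<in>\<U>. closedin (subtopology Y L) C"
    unfolding \<U>_def using CCL by (auto intro!: closedin_subset_topspace simp: CC_def)
  have fip: "\<forall>\<F>. finite \<F> \<and> \<F> \<subseteq> \<U> \<longrightarrow> \<Inter>\<F> \<noteq> {}"
  proof (intro allI impI)
    fix \<F> assume F: "finite \<F> \<and> \<F> \<subseteq> \<U>"
    then obtain J where J: "J \<subseteq> Idx" "finite J" "\<F> = CC ` J"
      using finite_subset_image[of \<F> CC Idx] unfolding \<U>_def by blast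
    show "\<Inter>\<F> \<noteq> {}"
    proof (cases "J = {}")
      case True then show ?thesis using J by simp
    next
      case False
      define As where "As = \<Union>(fst ` J)"
      define \<epsilon>s where "\<epsilon>s = Min (snd ` J)"
      have Jp: "finite A \<and> A \<subseteq> H \<and> \<epsilon> > 0" if "(A,\<epsilon>) \<in> J" for A \<epsilon> using J that by (auto simp: Idx_def)
      have fJ: "finite A \<and> A \<subseteq> H" if AJ: "A \<in> fst ` J" for A
      proof -
        obtain j where "j \<in> J" "A = fst j" using AJ by blast
        then have "(A, snd j) \<in> J" by simp
        then show ?thesis using Jp by blast
      qed
      have As: "finite As" "As \<subseteq> H"
        unfolding As_def using fJ J(2) by (auto intro!: finite_Union)
      have "\<epsilon>s \<in> snd ` J" unfolding \<epsilon>s_def using J False by (intro Min_in) auto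
      then have \<epsilon>s: "\<epsilon>s > 0" using J by (auto simp: Idx_def)
      have "finite (insert e As)" "insert e As \<subseteq> H" using As e by auto
      moreover have "min \<epsilon>s (1/2) > 0" using \<epsilon>s by simp
      ultimately obtain x where x: "x \<in> topspace X" "\<forall>a\<in>insert e As. norm (a x - p a) < min \<epsilon>s (1/2)"
        using chr.density[OF chr.intro[OF pS]] by blast
      have "f x \<in> CC j" if jJ: "j \<in> J" for j
      proof -
        obtain A \<epsilon> where j: "j = (A, \<epsilon>)" by fastforce
        have "\<epsilon> \<in> snd ` J" using jJ j by (metis image_eqI snd_conv)
        then have "\<epsilon>s \<le> \<epsilon>" unfolding \<epsilon>s_def using J(2) by (intro Min_le) auto
        moreover have "A \<in> fst ` J" using jJ j by (metis image_eqI fst_conv)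
        then have "A \<subseteq> As" unfolding As_def by blast
        ultimately have "\<forall>a\<in>insert e A. norm (a x - p a) < min \<epsilon> (1/2)"
        proof (intro ballI)
          fix a assume le: "\<epsilon>s \<le> \<epsilon>" and AA: "A \<subseteq> As" and a: "a \<in> insert e A"
          then have "a \<in> insert e As" by blast
          then have "norm (a x - p a) < min \<epsilon>s (1/2)" using x(2) by blast
          moreover have "min \<epsilon>s (1/2) \<le> min \<epsilon> (1/2)" using le by (intro min.mono) auto
          ultimately show "norm (a x - p a) < min \<epsilon> (1/2)" by linarith
        qed
        then have "x \<in> Us A \<epsilon>" using x(1) by (simp add: Us_def)
        moreover have "f ` Us A \<epsilon> \<subseteq> topspace Y" using UsL LY by blast
        ultimately have "f x \<in> Y closure_of (f ` Us A \<epsilon>)"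
          using closure_of_subset[of "f ` Us A \<epsilon>" Y] by blast
        then show ?thesis by (simp add: j CC_def)
      qed
      then show ?thesis using J by blast
    qed
  qed
  have "(\<forall>C\<in>\<U>. closedin (subtopology Y L) C) \<and> (\<forall>\<F>. finite \<F> \<and> \<F> \<subseteq> \<U> \<longrightarrow> \<Inter>\<F> \<noteq> {}) \<longrightarrow> \<Inter>\<U> \<noteq> {}"
    using cpt unfolding compact_space_fip by (rule spec)
  then have "\<Inter>\<U> \<noteq> {}" using clo fip by blast
  then obtain y where y: "y \<in> \<Inter>\<U>" by blast
  have idx1: "({}, 1) \<in> Idx" by (simp add: Idx_def)
  have "y \<in> CC ({},1)" using y idx1 unfolding \<U>_def by blast
  then have yY: "y \<in> topspace Y" using CCL LY by blast
  show ?thesis unfolding cluster_def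
  proof (intro exI[of _ y] conjI[OF yY] ballI allI impI)
    fix a \<epsilon> assume a: "a \<in> H" and \<epsilon>: "(\<epsilon>::real) > 0"
    have "({a}, \<epsilon>) \<in> Idx" using a \<epsilon> by (simp add: Idx_def)
    then have "y \<in> CC ({a}, \<epsilon>)" using y unfolding \<U>_def by blast
    moreover have "Us {a} \<epsilon> \<subseteq> {x \<in> topspace X. norm (a x - p a) < \<epsilon>}" by (auto simp: Us_def)
    ultimately show "y \<in> Y closure_of f ` {x \<in> topspace X. norm (a x - p a) < \<epsilon>}"
    proof -
      assume y1: "y \<in> CC ({a}, \<epsilon>)" and sub: "Us {a} \<epsilon> \<subseteq> {x \<in> topspace X. norm (a x - p a) < \<epsilon>}"
      have "CC ({a}, \<epsilon>) = Y closure_of (f ` Us {a} \<epsilon>)" by (simp add: CC_def)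
      also have "\<dots> \<subseteq> Y closure_of f ` {x \<in> topspace X. norm (a x - p a) < \<epsilon>}"
        by (intro closure_of_mono image_mono sub)
      finally show ?thesis using y1 by blast
    qed
  qed
qed

definition Fx :: "(('a \<Rightarrow> complex) \<Rightarrow> complex) \<Rightarrow> 'c" where
  "Fx p = (SOME y. cluster p y)"

lemma Fx_cluster: assumes "p \<in> S" shows "cluster p (Fx p)"
  unfolding Fx_def by (rule someI_ex[OF cluster_exists[OF assms]])


lemma Fx_ii: assumes x: "x \<in> topspace X" shows "Fx (ii x) = f x"
proof (rule ccontr)
  assume ne: "Fx (ii x) \<noteq> f x"
  define y where "y = Fx (ii x)"
  have cl: "cluster (ii x) y" unfolding y_def using ii_char[OF x] by (rule Fx_cluster)
  have fx: "f x \<in> topspace Y" using fc x by (auto simp: continuous_map_def)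
  have V: "openin Y (topspace Y - {f x})"
    using closedin_t1_singleton[OF Hausdorff_imp_t1_space[OF HY] fx] by blast
  have yV: "y \<in> topspace Y - {f x}" using cl ne by (auto simp: cluster_def y_def)
  obtain g :: "'c \<Rightarrow> complex" and L where g: "continuous_map Y euclidean g" "g y = 1" "compactin Y L" "L \<subseteq> topspace Y - {f x}"
    "\<And>z. z \<notin> L \<Longrightarrow> g z = 0" "\<And>z. norm (g z) \<le> 1"
    using Urysohn_Y[OF V yV] by blast
  have G: "comp_f g \<in> H" using g by (intro comp_H) auto
  have "ii x (comp_f g) = g y" using key[OF cl g(1) G] .
  moreover have "ii x (comp_f g) = g (f x)" using G x by (simp add: ii_eval comp_f_def)
  moreover have "g (f x) = 0" using g(4,5) by blast
  ultimately show False using g(2) by simp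
qed

lemma Fx_cont: "continuous_map bX Y Fx"
  unfolding continuous_map_def
proof (intro conjI allI impI)
  show "Fx \<in> topspace bX \<rightarrow> topspace Y"
    using Fx_cluster by (auto simp: topspace_bX cluster_def)
  fix V assume V: "openin Y V"
  show "openin bX {q \<in> topspace bX. Fx q \<in> V}"
  proof (subst openin_subopen, intro ballI)
    fix q0 assume q0: "q0 \<in> {q \<in> topspace bX. Fx q \<in> V}"
    then have q0S: "q0 \<in> S" and q0V: "Fx q0 \<in> V" by (auto simp: topspace_bX)
    obtain g :: "'c \<Rightarrow> complex" and L where g: "continuous_map Y euclidean g" "g (Fx q0) = 1" "compactin Y L" "L \<subseteq> V"
      "\<And>z. z \<notin> L \<Longrightarrow> g z = 0" "\<And>z. norm (g z) \<le> 1"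
      using Urysohn_Y[OF V q0V] by blast
    have G: "comp_f g \<in> H" using g by (intro comp_H) auto
    define W where "W = {q \<in> topspace bX. q (comp_f g) \<in> ball 1 (1/2)}"
    have "openin bX W" unfolding W_def using eval_cont[OF G] by (rule openin_continuous_map_preimage) auto
    moreover have "q0 \<in> W" using q0 key[OF Fx_cluster[OF q0S] g(1) G] g(2) by (simp add: W_def)
    moreover have "W \<subseteq> {q \<in> topspace bX. Fx q \<in> V}"
    proof
      fix q assume q: "q \<in> W"
      then have qS: "q \<in> S" by (auto simp: W_def topspace_bX)
      have "g (Fx q) = q (comp_f g)" using key[OF Fx_cluster[OF qS] g(1) G] by simp
      moreover have "q (comp_f g) \<noteq> 0" using q by (auto simp: W_def)
      ultimately have "Fx q \<in> L" using g(5) by metis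
      then show "q \<in> {q \<in> topspace bX. Fx q \<in> V}" using q g(4) by (auto simp: W_def)
    qed
    ultimately show "\<exists>T. openin bX T \<and> q0 \<in> T \<and> T \<subseteq> {q \<in> topspace bX. Fx q \<in> V}" by blast
  qed
qed


lemma Tcomp: assumes a0: "a0 \<in> H" and c: "c \<noteq> 0" shows "compactin bX {q \<in> S. q a0 = c}"
proof -
  define P where "P = product_topology (\<lambda>_. euclidean :: complex topology) H"
  have "\<forall>b\<in>H. \<exists>M. \<forall>x. norm (b x) \<le> M"
  proof
    fix b assume "b \<in> H"
    then have "b \<in> Cb X" by (rule HX_Cb)
    then obtain M where "M > 0" "\<forall>x. norm (b x) \<le> M" using Cb_bound by blast
    then show "\<exists>M. \<forall>x. norm (b x) \<le> M" by blast
  qed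
  then obtain Mb where Mb: "\<And>b. b \<in> H \<Longrightarrow> \<forall>x. norm (b x) \<le> Mb b" using bchoice[OF \<open>\<forall>b\<in>H. \<exists>M. \<forall>x. norm (b x) \<le> M\<close>] by blast
  define Box where "Box = PiE H (\<lambda>b. cball (0::complex) (Mb b))"
  have Box: "compactin P Box" unfolding P_def Box_def compactin_PiE by simp
  define T where "T = {q \<in> S. q a0 = c}"
  have TS: "T \<subseteq> S" by (auto simp: T_def)
  have TB: "T \<subseteq> Box"
  proof
    fix q assume q: "q \<in> T"
    then have qS: "q \<in> S" by (simp add: T_def)
    have "norm (q b) \<le> Mb b" if "b \<in> H" for b using chr.p_bound[OF chr.intro[OF qS] that] Mb[OF that] by blast
    moreover have "q \<in> extensional H" using qS by (simp add: characters_def)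
    ultimately show "q \<in> Box" unfolding Box_def PiE_iff by simp
  qed
  have proj: "continuous_map P euclidean (\<lambda>q. q b)" if "b \<in> H" for b
    unfolding P_def using that by (rule continuous_map_product_projection)
  define Z1 where "Z1 = {q \<in> topspace P. \<forall>t\<in>H\<times>H. q (\<lambda>x. fst t x + snd t x) - q (fst t) - q (snd t) = 0}"
  define Z2 where "Z2 = {q \<in> topspace P. \<forall>t\<in>(UNIV::complex set)\<times>H. q (\<lambda>x. fst t * snd t x) - fst t * q (snd t) = 0}"
  define Z3 where "Z3 = {q \<in> topspace P. \<forall>t\<in>H\<times>H. q (\<lambda>x. fst t x * snd t x) - q (fst t) * q (snd t) = 0}"
  define Z4 where "Z4 = {q \<in> topspace P. \<forall>t\<in>{()}. q a0 - c = 0}"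
  have Z1: "closedin P Z1" unfolding Z1_def
    by (rule closedin_zeros) (auto intro!: continuous_map_diff proj HX_add)
  have Z2: "closedin P Z2" unfolding Z2_def
    by (rule closedin_zeros) (auto intro!: continuous_map_diff proj HX_scale cm_mult)
  have Z3: "closedin P Z3" unfolding Z3_def
    by (rule closedin_zeros) (auto intro!: continuous_map_diff proj HX_mult HX_Cb cm_mult)
  have Z4: "closedin P Z4" unfolding Z4_def
    by (rule closedin_zeros) (auto intro!: continuous_map_diff proj a0)
  have T_eq: "T = Z1 \<inter> Z2 \<inter> Z3 \<inter> Z4"
  proof
    show "T \<subseteq> Z1 \<inter> Z2 \<inter> Z3 \<inter> Z4"
      by (auto simp: T_def Z1_def Z2_def Z3_def Z4_def P_def characters_def PiE_iff)
    show "Z1 \<inter> Z2 \<inter> Z3 \<inter> Z4 \<subseteq> T"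
    proof
      fix q assume q: "q \<in> Z1 \<inter> Z2 \<inter> Z3 \<inter> Z4"
      have "q \<in> extensional H" using q by (auto simp: Z1_def P_def PiE_iff)
      moreover have "\<forall>a\<in>H. \<forall>b\<in>H. q (\<lambda>x. a x + b x) = q a + q b"
      proof (intro ballI)
        fix a b assume "a \<in> H" "b \<in> H"
        then have ab: "(a,b) \<in> H \<times> H" by simp
        have zz: "\<forall>t\<in>H\<times>H. q (\<lambda>x. fst t x + snd t x) - q (fst t) - q (snd t) = 0"
          using q by (simp add: Z1_def)
        have "q (\<lambda>x. a x + b x) - q a - q b = 0" using bspec[OF zz ab] by simp
        then show "q (\<lambda>x. a x + b x) = q a + q b" by (metis diff_diff_add eq_iff_diff_eq_0)
      qed
      moreover have "\<forall>a\<in>H. \<forall>k. q (\<lambda>x. k * a x) = k * q a"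
      proof (intro ballI allI)
        fix a k assume "a \<in> H"
        then have ab: "(k,a) \<in> (UNIV::complex set) \<times> H" by simp
        have zz: "\<forall>t\<in>(UNIV::complex set)\<times>H. q (\<lambda>x. fst t * snd t x) - fst t * q (snd t) = 0"
          using q by (simp add: Z2_def)
        have "q (\<lambda>x. k * a x) - k * q a = 0" using bspec[OF zz ab] by simp
        then show "q (\<lambda>x. k * a x) = k * q a" by simp
      qed
      moreover have "\<forall>a\<in>H. \<forall>b\<in>H. q (\<lambda>x. a x * b x) = q a * q b"
      proof (intro ballI)
        fix a b assume "a \<in> H" "b \<in> H"
        then have ab: "(a,b) \<in> H \<times> H" by simp
        have zz: "\<forall>t\<in>H\<times>H. q (\<lambda>x. fst t x * snd t x) - q (fst t) * q (snd t) = 0"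
          using q by (simp add: Z3_def)
        have "q (\<lambda>x. a x * b x) - q a * q b = 0" using bspec[OF zz ab] by simp
        then show "q (\<lambda>x. a x * b x) = q a * q b" by simp
      qed
      moreover have "q a0 = c" using q by (simp add: Z4_def)
      ultimately show "q \<in> T" using a0 c by (auto simp: T_def characters_def)
    qed
  qed
  have "closedin P (Z1 \<inter> Z2 \<inter> Z3 \<inter> Z4)" using Z1 Z2 Z3 Z4 by (intro closedin_Int)
  then have cT: "closedin P T" by (simp only: T_eq)
  have "compactin P T" by (rule closed_compactin[OF Box TB cT])
  then have cS: "compactin (subtopology P S) T" unfolding compactin_subtopology using TS by blast
  have bX: "bX = subtopology P S" by (simp only: betaB_def P_def)
  show ?thesis using cS unfolding bX T_def .
qed


lemma proper_any:
  assumes f2c: "continuous_map bX Y f2" and f2e: "\<forall>x\<in>topspace X. f2 (ii x) = f x"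
  shows "proper_map bX Y f2"
proof (rule compact_imp_proper_map)
  show "k_space Y" using LCY by (rule locally_compact_imp_k_space)
  show "kc_space Y" using HY by (rule Hausdorff_imp_kc_space)
  show "f2 \<in> topspace bX \<rightarrow> topspace Y" using f2c by (simp add: continuous_map_def)
  show "continuous_map bX Y f2 \<or> kc_space bX" using f2c by simp
  fix K assume K: "compactin Y K"
  have Kb: "compactin B (r' ` K)" using K r'c by (rule image_compactin)
  obtain h where h: "h \<in> C0 B" "\<And>y. y \<in> r' ` K \<Longrightarrow> h y = 1" "\<And>y. norm (h y) \<le> 1"
    "\<And>y. y \<in> topspace B \<Longrightarrow> h y \<in> complex_of_real ` {0..1}"
    using Urysohn_compact[OF LC HB Kb] by blast
  define a where "a = (\<lambda>z. cconst X 1 z * h (r z))"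
  have a: "a \<in> H" unfolding a_def using hr_Cb(2)[OF h(1) h(3) Cb_const] .
  have hc: "continuous_map B euclidean h" using h(1) by (simp add: C0_def)
  have g2: "continuous_map bX euclidean (\<lambda>q. h (r' (f2 q)))"
    using continuous_map_compose[OF continuous_map_compose[OF f2c r'c] hc] by (simp add: o_def)
  have eqa: "q a = h (r' (f2 q))" if q: "q \<in> topspace bX" for q
  proof -
    have "(\<lambda>q. q a) q = (\<lambda>q. h (r' (f2 q))) q"
    proof (rule agree[OF _ eval_cont[OF a] g2 _ q])
    show "Hausdorff_space (euclidean :: complex topology)" by simp
    fix x assume x: "x \<in> topspace X"
    have "ii x a = h (r x)" using a x by (simp add: ii_eval a_def cconst_def)
    also have "\<dots> = h (r' (f2 (ii x)))" using f2e x comm by simp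
    finally show "ii x a = h (r' (f2 (ii x)))" .
  qed
  then show ?thesis by simp
  qed
  define T where "T = {q \<in> S. q a = 1}"
  have cT: "compactin bX T" unfolding T_def using a by (intro Tcomp) auto
  have sub: "{q \<in> topspace bX. f2 q \<in> K} \<subseteq> T"
  proof
    fix q assume q: "q \<in> {q \<in> topspace bX. f2 q \<in> K}"
    then have "q a = h (r' (f2 q))" "r' (f2 q) \<in> r' ` K" using eqa by auto
    then have "q a = 1" using h(2) by simp
    then show "q \<in> T" using q by (simp add: T_def topspace_bX)
  qed
  have "closedin bX {q \<in> topspace bX. f2 q \<in> K}"
    using f2c compactin_imp_closedin[OF HY K] by (rule closedin_continuous_map_preimage)
  then show "compactin bX {q \<in> topspace bX. f2 q \<in> K}"
    using closed_compactin[OF cT sub] by blast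
qed

lemma uniq:
  assumes "continuous_map bX Y f1 \<and> (\<forall>x\<in>topspace X. f1 (ii x) = f x) \<and> continuous_map bX Y f2 \<and> (\<forall>x\<in>topspace X. f2 (ii x) = f x)"
    and p: "p \<in> topspace bX"
  shows "f1 p = f2 p"
proof -
  have c1: "continuous_map bX Y f1" and c2: "continuous_map bX Y f2"
    and e1: "\<forall>x\<in>topspace X. f1 (ii x) = f x" and e2: "\<forall>x\<in>topspace X. f2 (ii x) = f x"
    using assms(1) by simp_all
  show ?thesis
  proof (rule agree[OF HY c1 c2 _ p])
    fix x assume "x \<in> topspace X"
    then show "f1 (ii x) = f2 (ii x)" using e1 e2 by simp
  qed
qed

end

theorem proposition4p8:
  fixes B :: "'b topology" and X :: "'a topology" and X' :: "'c topology"
    and r :: "'a \<Rightarrow> 'b" and r' :: "'c \<Rightarrow> 'b" and f :: "'a \<Rightarrow> 'c"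
  assumes "locally_compact_space B" and "Hausdorff_space B"
    and "continuous_map X B r"
    and "Hausdorff_space X'" and "continuous_map X' B r'" and "proper_map X' B r'"
    and "continuous_map X X' f" and "\<forall>x \<in> topspace X. r' (f x) = r x"
  shows "(\<exists>f'. continuous_map (betaB X B r) X' f'
              \<and> (\<forall>x \<in> topspace X. f' (betaI X B r x) = f x))
       \<and> (\<forall>f1 f2. continuous_map (betaB X B r) X' f1
              \<and> (\<forall>x \<in> topspace X. f1 (betaI X B r x) = f x)
              \<and> continuous_map (betaB X B r) X' f2
              \<and> (\<forall>x \<in> topspace X. f2 (betaI X B r x) = f x)
              \<longrightarrow> (\<forall>p \<in> topspace (betaB X B r). f1 p = f2 p))
       \<and> (\<forall>f'. continuous_map (betaB X B r) X' f'
              \<and> (\<forall>x \<in> topspace X. f' (betaI X B r x) = f x)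
              \<longrightarrow> proper_map (betaB X B r) X' f')"
proof -
  interpret bsetupB X B r X' r' f
    using assms by unfold_locales auto
  have A: "\<exists>f'. continuous_map (betaB X B r) X' f' \<and> (\<forall>x \<in> topspace X. f' (betaI X B r x) = f x)"
    by (intro exI[of _ Fx] conjI Fx_cont ballI Fx_ii)
  have Bq: "\<forall>f1 f2. continuous_map (betaB X B r) X' f1
              \<and> (\<forall>x \<in> topspace X. f1 (betaI X B r x) = f x)
              \<and> continuous_map (betaB X B r) X' f2
              \<and> (\<forall>x \<in> topspace X. f2 (betaI X B r x) = f x)
              \<longrightarrow> (\<forall>p \<in> topspace (betaB X B r). f1 p = f2 p)"
    by (intro allI impI ballI) (erule uniq)
  have C: "\<forall>f'. continuous_map (betaB X B r) X' f'
              \<and> (\<forall>x \<in> topspace X. f' (betaI X B r x) = f x)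
              \<longrightarrow> proper_map (betaB X B r) X' f'"
    by (intro allI impI) (elim conjE, erule proper_any, assumption)
  show ?thesis using A Bq C by (intro conjI)
qed

end
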